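(* For all $(t,h)\in[0,T)\times\mathbb{R}_+$, $\lim_{z\to0}\widehat J(t,z,h)=0$ and $\lim_{z\to\infty}\widehat J(t,z,h)=\infty$.
   Context: Fix constants $T>0$, $r>0$, $\mu\in\mathbb{R}$, $\sigma>0$, $\rho>0$, $m^0\ge 0$, $m^1\ge 0$, $\kappa>0$, $\delta>0$, $\alpha\in(0,1)$, $I>0$ and a number $f(I)>0$. Write $\mathbb{R}_+=(0,\infty)$, $\mathcal{O}=[0,T]\times\mathbb{R}_+^2$, $\theta=(\mu-r)/\sigma$. Let $(\Omega,\mathcal{F},\mathbb{F},\mathbb{P})$ be a complete filtered probability space satisfying the usual conditions, carrying a standard $\mathbb{F}$-Brownian motion $B$. Let $\widehat u(z,h)=(1-\alpha)(z/\alpha)^{\alpha/(\alpha-1)}h$. For $(t,z,h)\in\mathcal{O}$ and $s\in[t,T]$ let $H^2_s=he^{-\delta(s-t)}+\frac{f(I)}{\delta}(1-e^{-\delta(s-t)})$, $M^{H^2}_s=m^0+m^1(H^2_s)^{-\kappa}$, and let $Z^2$ solve $dZ^2_s=(\rho-r+M^{H^2}_s)Z^2_s\,ds-\theta Z^2_s\,dB_s$, $Z^2_t=z$. Define $W(t,z,h)=\mathbb{E}\big[\int_t^T e^{-\int_t^s(\rho+M^{H^2}_u)du}\,\widehat u(Z^2_s,H^2_s)\,ds\big]$; subscripts denote partial derivatives. For $z,h>0$ and $s\ge0$ let $H^1_s=he^{-\delta s}$, $M^{H^1}_s=m^0+m^1(H^1_s)^{-\kappa}$ and $Z^1_s=z\exp\big(-(r+\tfrac12\theta^2)s-\theta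 B_s+\int_0^s(\rho+M^{H^1}_u)du\big)$, with $\mathbb{E}_{z,h}$ the corresponding expectation. For $(t,z,h)\in\mathcal{O}$, $\widehat J(t,z,h)=\sup_{0\le\tau\le T-t}\mathbb{E}_{z,h}\Big[\int_0^\tau\Big(Iz\,e^{-rs-\theta B_s-\frac12\theta^2 s}-e^{-\int_0^s(\rho+M^{H^1}_u)du}f(I)W_h(t+s,Z^1_s,H^1_s)\Big)ds\Big]$ over $\mathbb{F}$-stopping times with values in $[0,T-t]$. *)

theory Defs
  imports "HOL-Probability.Probability"
begin

text \<open>Complete filtered probability space satisfying the usual conditions
  (time index real; only nonnegative times matter).\<close>
definition usual_filtered_prob_space :: "'a measure \<Rightarrow> (real \<Rightarrow> 'a measure) \<Rightarrow> bool" where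
  "usual_filtered_prob_space M F \<longleftrightarrow>
     prob_space M \<and> filtration (space M) F \<and> (\<forall>t. sets (F t) \<subseteq> sets M) \<and>
     (\<forall>A N. N \<in> null_sets M \<and> A \<subseteq> N \<longrightarrow> A \<in> sets (F 0)) \<and>
     (\<forall>t. sets (F t) = (\<Inter>u\<in>{t<..}. sets (F u)))"

definition std_F_brownian_motion ::
    "'a measure \<Rightarrow> (real \<Rightarrow> 'a measure) \<Rightarrow> (real \<Rightarrow> 'a \<Rightarrow> real) \<Rightarrow> bool" where
  "std_F_brownian_motion M F B \<longleftrightarrow>
     (\<forall>t\<ge>0. B t \<in> borel_measurable (F t)) \<and>
     (\<forall>\<omega>\<in>space M. B 0 \<omega> = 0 \<and> continuous_on {0..} (\<lambda>t. B t \<omega>)) \<and>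
     (\<forall>s t. 0 \<le> s \<and> s < t \<longrightarrow>
        distributed M lborel (\<lambda>\<omega>. B t \<omega> - B s \<omega>)
          (\<lambda>x. ennreal (normal_density 0 (sqrt (t - s)) x)) \<and>
        (\<forall>A\<in>sets (F s). \<forall>U\<in>sets borel.
           measure M (A \<inter> {\<omega>\<in>space M. B t \<omega> - B s \<omega> \<in> U}) =
           measure M A * measure M {\<omega>\<in>space M. B t \<omega> - B s \<omega> \<in> U}))"

definition theta :: "real \<Rightarrow> real \<Rightarrow> real \<Rightarrow> real" where
  "theta \<mu> r \<sigma> = (\<mu> - r) / \<sigma>"

definition u_hat :: "real \<Rightarrow> real \<Rightarrow> real \<Rightarrow> real" where
  "u_hat \<alpha> z h = (1 - \<alpha>) * (z / \<alpha>) powr (\<alpha> / (\<alpha> - 1)) * h"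

definition Mfun :: "real \<Rightarrow> real \<Rightarrow> real \<Rightarrow> real \<Rightarrow> real" where
  "Mfun m0 m1 \<kappa> x = m0 + m1 * x powr (- \<kappa>)"

text \<open>\<open>H2 \<delta> fI t h s\<close> is \<open>H^2_s\<close> started at \<open>(t,h)\<close>; \<open>fI\<close> stands for \<open>f(I)\<close>.\<close>
definition H2 :: "real \<Rightarrow> real \<Rightarrow> real \<Rightarrow> real \<Rightarrow> real \<Rightarrow> real" where
  "H2 \<delta> fI t h s = h * exp (- \<delta> * (s - t)) + fI / \<delta> * (1 - exp (- \<delta> * (s - t)))"

text \<open>Explicit (unique strong) solution of
  \<open>dZ = (\<rho> - r + M^{H^2}) Z ds - \<theta> Z dB\<close>, \<open>Z_t = z\<close>.\<close>
definition Z2 :: "(real \<Rightarrow> 'a \<Rightarrow> real) \<Rightarrow> real \<Rightarrow> real \<Rightarrow> real \<Rightarrow> real \<Rightarrow> real \<Rightarrow> real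
    \<Rightarrow> real \<Rightarrow> real \<Rightarrow> real \<Rightarrow> real \<Rightarrow> real \<Rightarrow> real \<Rightarrow> real \<Rightarrow> 'a \<Rightarrow> real" where
  "Z2 B r \<mu> \<sigma> \<rho> m0 m1 \<kappa> \<delta> fI t z h s \<omega> =
     z * exp (integral {t..s} (\<lambda>u. \<rho> - r + Mfun m0 m1 \<kappa> (H2 \<delta> fI t h u))
              - theta \<mu> r \<sigma> * (B s \<omega> - B t \<omega>) - (theta \<mu> r \<sigma>)\<^sup>2 / 2 * (s - t))"

definition W :: "'a measure \<Rightarrow> (real \<Rightarrow> 'a \<Rightarrow> real) \<Rightarrow> real \<Rightarrow> real \<Rightarrow> real \<Rightarrow> real \<Rightarrow> real
    \<Rightarrow> real \<Rightarrow> real \<Rightarrow> real \<Rightarrow> real \<Rightarrow> real \<Rightarrow> real \<Rightarrow> real \<Rightarrow> real \<Rightarrow> real \<Rightarrow> real" where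
  "W M B T r \<mu> \<sigma> \<rho> m0 m1 \<kappa> \<delta> \<alpha> fI t z h =
     (\<integral>\<omega>. integral {t..T} (\<lambda>s.
         exp (- integral {t..s} (\<lambda>u. \<rho> + Mfun m0 m1 \<kappa> (H2 \<delta> fI t h u)))
         * u_hat \<alpha> (Z2 B r \<mu> \<sigma> \<rho> m0 m1 \<kappa> \<delta> fI t z h s \<omega>) (H2 \<delta> fI t h s)) \<partial>M)"

definition W_h :: "'a measure \<Rightarrow> (real \<Rightarrow> 'a \<Rightarrow> real) \<Rightarrow> real \<Rightarrow> real \<Rightarrow> real \<Rightarrow> real \<Rightarrow> real
    \<Rightarrow> real \<Rightarrow> real \<Rightarrow> real \<Rightarrow> real \<Rightarrow> real \<Rightarrow> real \<Rightarrow> real \<Rightarrow> real \<Rightarrow> real \<Rightarrow> real" where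
  "W_h M B T r \<mu> \<sigma> \<rho> m0 m1 \<kappa> \<delta> \<alpha> fI t z h =
     deriv (\<lambda>h'. W M B T r \<mu> \<sigma> \<rho> m0 m1 \<kappa> \<delta> \<alpha> fI t z h') h"

definition H1 :: "real \<Rightarrow> real \<Rightarrow> real \<Rightarrow> real" where
  "H1 \<delta> h s = h * exp (- \<delta> * s)"

definition Z1 :: "(real \<Rightarrow> 'a \<Rightarrow> real) \<Rightarrow> real \<Rightarrow> real \<Rightarrow> real \<Rightarrow> real \<Rightarrow> real \<Rightarrow> real
    \<Rightarrow> real \<Rightarrow> real \<Rightarrow> real \<Rightarrow> real \<Rightarrow> real \<Rightarrow> 'a \<Rightarrow> real" where
  "Z1 B r \<mu> \<sigma> \<rho> m0 m1 \<kappa> \<delta> z h s \<omega> =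
     z * exp (- (r + (theta \<mu> r \<sigma>)\<^sup>2 / 2) * s - theta \<mu> r \<sigma> * B s \<omega>
              + integral {0..s} (\<lambda>u. \<rho> + Mfun m0 m1 \<kappa> (H1 \<delta> h u)))"

definition J_hat :: "'a measure \<Rightarrow> (real \<Rightarrow> 'a measure) \<Rightarrow> (real \<Rightarrow> 'a \<Rightarrow> real) \<Rightarrow> real
    \<Rightarrow> real \<Rightarrow> real \<Rightarrow> real \<Rightarrow> real \<Rightarrow> real \<Rightarrow> real \<Rightarrow> real \<Rightarrow> real \<Rightarrow> real \<Rightarrow> real \<Rightarrow> real
    \<Rightarrow> real \<Rightarrow> real \<Rightarrow> real \<Rightarrow> ereal" where
  "J_hat M F B T r \<mu> \<sigma> \<rho> m0 m1 \<kappa> \<delta> \<alpha> I fI t z h =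
     (SUP \<tau>\<in>{\<tau>. stopping_time F \<tau> \<and> (\<forall>\<omega>\<in>space M. 0 \<le> \<tau> \<omega> \<and> \<tau> \<omega> \<le> T - t)}.
        ereal (\<integral>\<omega>. integral {0..\<tau> \<omega>} (\<lambda>s.
            I * z * exp (- r * s - theta \<mu> r \<sigma> * B s \<omega> - (theta \<mu> r \<sigma>)\<^sup>2 / 2 * s)
            - exp (- integral {0..s} (\<lambda>u. \<rho> + Mfun m0 m1 \<kappa> (H1 \<delta> h u))) * fI
              * W_h M B T r \<mu> \<sigma> \<rho> m0 m1 \<kappa> \<delta> \<alpha> fI (t + s)
                  (Z1 B r \<mu> \<sigma> \<rho> m0 m1 \<kappa> \<delta> z h s \<omega>) (H1 \<delta> h s)) \<partial>M))"

end

theory Submission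
  imports Defs "HOL-Probability.Conditional_Expectation"
begin

lemma normal_exp_identity:
  fixes s k x :: real assumes "s > 0"
  shows "normal_density 0 s x * exp (k * x) = exp (k^2 * s^2 / 2) * normal_density (k * s^2) s x"
proof -
  have "-(x - 0)\<^sup>2 / (2 * s\<^sup>2) + k * x = k^2 * s^2 / 2 + (-(x - k * s^2)\<^sup>2 / (2 * s\<^sup>2))"
    using assms by (simp add: field_simps power2_eq_square)
  then have "exp (-(x - 0)\<^sup>2 / (2 * s\<^sup>2)) * exp (k * x) = exp (k^2 * s^2 / 2) * exp (-(x - k * s^2)\<^sup>2 / (2 * s\<^sup>2))"
    by (metis exp_add)
  then show ?thesis unfolding normal_density_def by (simp add: algebra_simps)
qed

lemma normal_exp_moment:
  fixes X :: "'a \<Rightarrow> real" and s k :: real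
  assumes D: "distributed M lborel X (\<lambda>x. ennreal (normal_density 0 s x))" and s: "s > 0"
  shows "integrable M (\<lambda>\<omega>. exp (k * X \<omega>))" "(\<integral>\<omega>. exp (k * X \<omega>) \<partial>M) = exp (k^2 * s^2 / 2)"
proof -
  have eq: "(\<lambda>x. normal_density 0 s x * exp (k * x)) = (\<lambda>x. exp (k^2 * s^2 / 2) * normal_density (k * s^2) s x)"
    using normal_exp_identity[OF s] by auto
  have i: "integrable lborel (\<lambda>x. normal_density 0 s x * exp (k * x))"
    unfolding eq using s by simp
  show "integrable M (\<lambda>\<omega>. exp (k * X \<omega>))"
    using distributed_integrable[OF D, of "\<lambda>x. exp (k * x)"] i by simp
  have "(\<integral>x. normal_density 0 s x * exp (k * x) \<partial>lborel) = exp (k^2 * s^2 / 2)"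
    unfolding eq using s by simp
  then show "(\<integral>\<omega>. exp (k * X \<omega>) \<partial>M) = exp (k^2 * s^2 / 2)"
    using distributed_integral[OF D, of "\<lambda>x. exp (k * x)"] by simp
qed

locale bmset =
  fixes M :: "'a measure" and F :: "real \<Rightarrow> 'a measure" and B :: "real \<Rightarrow> 'a \<Rightarrow> real"
  assumes ufps: "usual_filtered_prob_space M F" and bm: "std_F_brownian_motion M F B"
begin
lemma prob: "prob_space M"
  using ufps unfolding usual_filtered_prob_space_def by auto
lemma filt: "filtration (space M) F"
  using ufps unfolding usual_filtered_prob_space_def by simp
lemma B_meas: assumes "0 \<le> t" shows "B t \<in> borel_measurable M"
proof (rule measurable_from_subalg)
  have "sets (F t) \<subseteq> sets M" using ufps unfolding usual_filtered_prob_space_def by blast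
  then show "subalgebra M (F t)"
    unfolding subalgebra_def using filtration.space_F[OF filt] by simp
  show "B t \<in> borel_measurable (F t)" using bm assms unfolding std_F_brownian_motion_def by blast
qed

lemma B0: "\<omega> \<in> space M \<Longrightarrow> B 0 \<omega> = 0"
  using bm unfolding std_F_brownian_motion_def by blast

lemma Bcont: "\<omega> \<in> space M \<Longrightarrow> continuous_on {0..} (\<lambda>t. B t \<omega>)"
  using bm unfolding std_F_brownian_motion_def by blast

lemma incr_exp:
  assumes "0 \<le> t0" "t0 \<le> s"
  shows "integrable M (\<lambda>\<omega>. exp (k * (B s \<omega> - B t0 \<omega>)))"
    "(\<integral>\<omega>. exp (k * (B s \<omega> - B t0 \<omega>)) \<partial>M) = exp (k^2 * (s - t0) / 2)"
proof -
  interpret prob_space M by (rule prob)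
  have "integrable M (\<lambda>\<omega>. exp (k * (B s \<omega> - B t0 \<omega>))) \<and>
    (\<integral>\<omega>. exp (k * (B s \<omega> - B t0 \<omega>)) \<partial>M) = exp (k^2 * (s - t0) / 2)"
  proof (cases "s = t0")
    case True
    have "integrable M (\<lambda>\<omega>. 1::real)" by simp
    moreover have "(\<integral>\<omega>. (1::real) \<partial>M) = 1" by (simp add: prob_space)
    ultimately show ?thesis using True by simp
  next
    case False
    then have lt: "t0 < s" using assms by auto
    have D: "distributed M lborel (\<lambda>\<omega>. B s \<omega> - B t0 \<omega>) (\<lambda>x. ennreal (normal_density 0 (sqrt (s - t0)) x))"
      using bm lt assms unfolding std_F_brownian_motion_def by blast
    have sp: "sqrt (s - t0) > 0" using lt by auto
    have e: "(sqrt (s - t0))^2 = s - t0" using lt by simp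
    show ?thesis using normal_exp_moment[OF D sp, of k] unfolding e by simp
  qed
  then show "integrable M (\<lambda>\<omega>. exp (k * (B s \<omega> - B t0 \<omega>)))"
    "(\<integral>\<omega>. exp (k * (B s \<omega> - B t0 \<omega>)) \<partial>M) = exp (k^2 * (s - t0) / 2)" by auto
qed
lemma Bc_meas: "(\<lambda>p. B (max 0 (fst p)) (snd p)) \<in> borel_measurable ((lborel::real measure) \<Otimes>\<^sub>M M)"
proof (rule borel_measurable_LIMSEQ_real)
  define u where "u n p = B (max 0 (real_of_int \<lfloor>fst p * real (Suc n)\<rfloor> / real (Suc n))) (snd p)" for n p
  show "u n \<in> borel_measurable ((lborel::real measure) \<Otimes>\<^sub>M M)" for n
  proof -
    have "(\<lambda>p. (\<lambda>i::int. B (max 0 (real_of_int i / real (Suc n))) (snd p)) (\<lfloor>fst p * real (Suc n)\<rfloor>) )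
       \<in> borel_measurable ((lborel::real measure) \<Otimes>\<^sub>M M)"
    proof (rule measurable_compose_countable[where f="\<lambda>i p. B (max 0 (real_of_int i / real (Suc n))) (snd p)"])
      show "(\<lambda>p. B (max 0 (real_of_int i / real (Suc n))) (snd p)) \<in> borel_measurable ((lborel::real measure) \<Otimes>\<^sub>M M)" for i
        using measurable_compose[OF measurable_snd B_meas[of "max 0 (real_of_int i / real (Suc n))"]] by simp
      show "(\<lambda>p. \<lfloor>fst p * real (Suc n)\<rfloor>) \<in> lborel \<Otimes>\<^sub>M M \<rightarrow>\<^sub>M count_space UNIV"
        by measurable
    qed
    then show ?thesis unfolding u_def by simp
  qed
  fix p assume p: "p \<in> space ((lborel::real measure) \<Otimes>\<^sub>M M)"
  then have w: "snd p \<in> space M" by (metis mem_Times_iff space_pair_measure)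
  have conv: "(\<lambda>n. real_of_int \<lfloor>fst p * real (Suc n)\<rfloor> / real (Suc n)) \<longlonglongrightarrow> fst p"
  proof -
    have l0: "(\<lambda>n. 1 / real (Suc n)) \<longlonglongrightarrow> 0"
      using LIMSEQ_inverse_real_of_nat by (simp add: inverse_eq_divide)
    have l1: "(\<lambda>n. fst p - 1 / real (Suc n)) \<longlonglongrightarrow> fst p"
      using tendsto_diff[OF tendsto_const l0, of "fst p"] by simp
    have l2: "(\<lambda>n. fst p) \<longlonglongrightarrow> fst p" by (rule tendsto_const)
    have b1: "fst p - 1 / real (Suc n) \<le> real_of_int \<lfloor>fst p * real (Suc n)\<rfloor> / real (Suc n)" for n
    proof -
      have "fst p * real (Suc n) - 1 \<le> real_of_int \<lfloor>fst p * real (Suc n)\<rfloor>"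
        using real_of_int_floor_gt_diff_one[of "fst p * real (Suc n)"] by (rule less_imp_le)
      then have "(fst p * real (Suc n) - 1) / real (Suc n) \<le> real_of_int \<lfloor>fst p * real (Suc n)\<rfloor> / real (Suc n)"
        by (rule divide_right_mono) simp
      moreover have "(fst p * real (Suc n) - 1) / real (Suc n) = fst p - 1 / real (Suc n)"
        by (simp add: field_simps)
      ultimately show ?thesis by simp
    qed
    have b2: "real_of_int \<lfloor>fst p * real (Suc n)\<rfloor> / real (Suc n) \<le> fst p" for n
    proof -
      have "real_of_int \<lfloor>fst p * real (Suc n)\<rfloor> \<le> fst p * real (Suc n)" by (rule of_int_floor_le)
      then have "real_of_int \<lfloor>fst p * real (Suc n)\<rfloor> / real (Suc n) \<le> fst p * real (Suc n) / real (Suc n)"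
        by (rule divide_right_mono) simp
      then show ?thesis by simp
    qed
    show ?thesis
      by (rule tendsto_sandwich[OF always_eventually always_eventually l1 l2]) (rule allI, rule b1, rule allI, rule b2)
  qed
  have cont: "continuous_on UNIV (\<lambda>s. B (max 0 s) (snd p))"
    by (rule continuous_on_compose2[OF Bcont[OF w]]) (auto intro!: continuous_intros)
  show "(\<lambda>n. u n p) \<longlonglongrightarrow> B (max 0 (fst p)) (snd p)"
    unfolding u_def
  proof (rule isCont_tendsto_compose[OF _ conv])
    show "isCont (\<lambda>s. B (max 0 s) (snd p)) (fst p)"
      using cont continuous_on_eq_continuous_at[OF open_UNIV] by blast
  qed
qed


lemma FL:
  fixes g :: "real \<Rightarrow> real" and k t0 a b :: real
  assumes t0: "0 \<le> t0" "t0 \<le> a" and ab: "a \<le> b" and gc: "continuous_on {a..b} g"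
  shows "integrable M (\<lambda>\<omega>. integral {a..b} (\<lambda>s. g s * exp (k * (B s \<omega> - B t0 \<omega>))))"
    "(\<integral>\<omega>. integral {a..b} (\<lambda>s. g s * exp (k * (B s \<omega> - B t0 \<omega>))) \<partial>M)
       = integral {a..b} (\<lambda>s. g s * exp (k^2 * (s - t0) / 2))"
proof -
  interpret prob_space M by (rule prob)
  interpret P: pair_sigma_finite lborel M ..
  interpret Q: pair_sigma_finite M lborel ..
  define G where "G s = indicator {a..b} s * g s" for s
  define fc where "fc s \<omega> = G s * exp (k * (B (max 0 s) \<omega> - B t0 \<omega>))" for s \<omega>
  have Gm: "G \<in> borel_measurable lborel"
    using borel_measurable_continuous_on_indicator[of "{a..b}" g] gc unfolding G_def by simp
  have Bt0: "B t0 \<in> borel_measurable M" by (rule B_meas[OF t0(1)])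
  have fm: "case_prod fc \<in> borel_measurable (lborel \<Otimes>\<^sub>M M)"
  proof -
    have 1: "(\<lambda>p. G (fst p)) \<in> borel_measurable (lborel \<Otimes>\<^sub>M M)"
      by (rule measurable_compose[OF measurable_fst Gm])
    have 2: "(\<lambda>p. B t0 (snd p)) \<in> borel_measurable (lborel \<Otimes>\<^sub>M M)"
      by (rule measurable_compose[OF measurable_snd Bt0])
    have 3: "(\<lambda>p. B (max 0 (fst p)) (snd p)) \<in> borel_measurable (lborel \<Otimes>\<^sub>M M)"
      by (rule Bc_meas)
    have "(\<lambda>p. G (fst p) * exp (k * (B (max 0 (fst p)) (snd p) - B t0 (snd p)))) \<in> borel_measurable (lborel \<Otimes>\<^sub>M M)"
      using 1 2 3 by measurable
    then show ?thesis unfolding fc_def by (simp add: case_prod_beta')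
  qed
  have inner: "(\<integral>\<omega>. fc s \<omega> \<partial>M) = G s * exp (k^2 * (s - t0) / 2)"
    and inner_int: "integrable M (fc s)" for s
  proof -
    have "(\<integral>\<omega>. fc s \<omega> \<partial>M) = G s * exp (k^2 * (s - t0) / 2) \<and> integrable M (fc s)"
    proof (cases "s \<in> {a..b}")
      case True
      then have ms: "max 0 s = s" and ts: "t0 \<le> s" using t0 by auto
      have "fc s = (\<lambda>\<omega>. G s * exp (k * (B s \<omega> - B t0 \<omega>)))" unfolding fc_def ms by simp
      then show ?thesis using incr_exp[OF t0(1) ts, of k] by simp
    next
      case False
      then have "G s = 0" unfolding G_def by simp
      then have "fc s = (\<lambda>\<omega>. 0)" unfolding fc_def by simp
      then show ?thesis using \<open>G s = 0\<close> by simp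
    qed
    then show "(\<integral>\<omega>. fc s \<omega> \<partial>M) = G s * exp (k^2 * (s - t0) / 2)" "integrable M (fc s)" by auto
  qed
  have normfc: "(\<integral>\<omega>. norm (fc s \<omega>) \<partial>M) = indicator {a..b} s * (\<bar>g s\<bar> * exp (k^2 * (s - t0) / 2))" for s
  proof -
    have "(\<lambda>\<omega>. norm (fc s \<omega>)) = (\<lambda>\<omega>. \<bar>G s\<bar> * exp (k * (B (max 0 s) \<omega> - B t0 \<omega>)))"
      unfolding fc_def by (simp add: abs_mult)
    moreover have "(\<integral>\<omega>. \<bar>G s\<bar> * exp (k * (B (max 0 s) \<omega> - B t0 \<omega>)) \<partial>M) = \<bar>G s\<bar> * exp (k^2 * (s - t0) / 2)"
    proof (cases "s \<in> {a..b}")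
      case True
      then have ms: "max 0 s = s" and ts: "t0 \<le> s" using t0 by auto
      show ?thesis unfolding ms using incr_exp[OF t0(1) ts, of k] by simp
    next
      case False
      then show ?thesis unfolding G_def by simp
    qed
    ultimately show ?thesis unfolding G_def by (simp add: abs_mult indicator_def)
  qed
  have cont2: "continuous_on {a..b} (\<lambda>s. \<bar>g s\<bar> * exp (k^2 * (s - t0) / 2))"
    by (intro continuous_intros gc) simp_all
  have cont3: "continuous_on {a..b} (\<lambda>s. g s * exp (k^2 * (s - t0) / 2))"
    by (intro continuous_intros gc) simp_all
  have integ1: "integrable lborel (\<lambda>s. \<integral>\<omega>. norm (fc s \<omega>) \<partial>M)"
    unfolding normfc using borel_integrable_compact[OF compact_Icc cont2] by simp
  have fint: "integrable (lborel \<Otimes>\<^sub>M M) (case_prod fc)"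
    by (rule P.Fubini_integrable[OF fm]) (use integ1 inner_int in simp_all)
  have fint': "integrable (M \<Otimes>\<^sub>M lborel) (\<lambda>(x, y). fc y x)"
    using P.integrable_product_swap[OF fint] by (simp add: case_prod_beta')
  have intM: "integrable M (\<lambda>\<omega>. \<integral>s. fc s \<omega> \<partial>lborel)"
    using Q.integrable_fst'[OF fint'] by simp
  have pw: "(\<integral>s. fc s \<omega> \<partial>lborel) = integral {a..b} (\<lambda>s. g s * exp (k * (B s \<omega> - B t0 \<omega>)))"
    if w: "\<omega> \<in> space M" for \<omega>
  proof -
    have cB: "continuous_on {a..b} (\<lambda>s. B s \<omega>)"
      using continuous_on_subset[OF Bcont[OF w]] t0 by auto
    have c: "continuous_on {a..b} (\<lambda>s. g s * exp (k * (B s \<omega> - B t0 \<omega>)))"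
      by (intro continuous_intros gc cB)
    have si: "set_integrable lborel {a..b} (\<lambda>s. g s * exp (k * (B s \<omega> - B t0 \<omega>)))"
      unfolding set_integrable_def using borel_integrable_compact[OF compact_Icc c] .
    have "(\<integral>s. fc s \<omega> \<partial>lborel) = (LINT s:{a..b}|lborel. g s * exp (k * (B s \<omega> - B t0 \<omega>)))"
      unfolding set_lebesgue_integral_def
    proof (rule Bochner_Integration.integral_cong[OF refl])
      fix s
      show "fc s \<omega> = indicator {a..b} s *\<^sub>R (g s * exp (k * (B s \<omega> - B t0 \<omega>)))"
      proof (cases "s \<in> {a..b}")
        case True
        then have ms: "max 0 s = s" using t0 by auto
        show ?thesis unfolding fc_def G_def ms using True by simp
      next
        case False
        then show ?thesis unfolding fc_def G_def by simp
      qed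
    qed
    also have "\<dots> = integral {a..b} (\<lambda>s. g s * exp (k * (B s \<omega> - B t0 \<omega>)))"
      by (rule set_borel_integral_eq_integral(2)[OF si])
    finally show ?thesis .
  qed
  show "integrable M (\<lambda>\<omega>. integral {a..b} (\<lambda>s. g s * exp (k * (B s \<omega> - B t0 \<omega>))))"
  proof -
    have "integrable M (\<lambda>\<omega>. \<integral>s. fc s \<omega> \<partial>lborel) = integrable M (\<lambda>\<omega>. integral {a..b} (\<lambda>s. g s * exp (k * (B s \<omega> - B t0 \<omega>))))"
      by (rule Bochner_Integration.integrable_cong[OF refl pw])
    then show ?thesis using intM by simp
  qed
  have "(\<integral>\<omega>. integral {a..b} (\<lambda>s. g s * exp (k * (B s \<omega> - B t0 \<omega>))) \<partial>M)
      = (\<integral>\<omega>. (\<integral>s. fc s \<omega> \<partial>lborel) \<partial>M)"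
    by (rule Bochner_Integration.integral_cong[OF refl pw[symmetric]])
  also have "\<dots> = (\<integral>s. (\<integral>\<omega>. fc s \<omega> \<partial>M) \<partial>lborel)"
    using P.Fubini_integral[OF fint] by simp
  also have "\<dots> = (\<integral>s. indicator {a..b} s *\<^sub>R (g s * exp (k^2 * (s - t0) / 2)) \<partial>lborel)"
    unfolding inner G_def by (simp add: mult.assoc)
  also have "\<dots> = integral {a..b} (\<lambda>s. g s * exp (k^2 * (s - t0) / 2))"
    using set_borel_integral_eq_integral(2)[of "{a..b}" "\<lambda>s. g s * exp (k^2 * (s - t0) / 2)"]
      borel_integrable_compact[OF compact_Icc cont3]
    unfolding set_integrable_def set_lebesgue_integral_def by simp
  finally show "(\<integral>\<omega>. integral {a..b} (\<lambda>s. g s * exp (k * (B s \<omega> - B t0 \<omega>))) \<partial>M)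
       = integral {a..b} (\<lambda>s. g s * exp (k^2 * (s - t0) / 2))" .
qed

end

lemma integral_rescale01:
  fixes f :: "real \<Rightarrow> real" assumes L: "0 \<le> L"
  shows "integral {0..L} f = L * integral {0..1} (\<lambda>w. f (L * w))"
proof (cases "L = 0")
  case True then show ?thesis by simp
next
  case False
  then have Lp: "L > 0" using L by simp
  have "integral ((\<lambda>x. x / L) ` {0..L}) (\<lambda>x. f (L * x)) = (1 / \<bar>L\<bar>) *\<^sub>R integral {0..L} f"
    by (rule integral_stretch_real) (use Lp in simp)
  moreover have "(\<lambda>x. x / L) ` {0..L} = {0..1}" using Lp by simp
  ultimately have "integral {0..1} (\<lambda>x. f (L * x)) = (1 / L) * integral {0..L} f" using Lp by simp
  then show ?thesis using Lp by simp
qed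

lemma param_indef:
  fixes f :: "real \<Rightarrow> real \<Rightarrow> real"
  assumes fc: "continuous_on (U \<times> {0..b}) (\<lambda>(x,t). f x t)"
  shows "continuous_on (U \<times> {0..b}) (\<lambda>(x,L). integral {0..L} (f x))"
proof -
  have c1: "continuous_on ((U \<times> {0..b}) \<times> cbox 0 1) (\<lambda>(xL, w). f (fst xL) (snd xL * w))"
  proof -
    have m: "continuous_on ((U \<times> {0..b}) \<times> cbox 0 1) (\<lambda>(xL, w::real). (fst xL, snd xL * w))"
      by (auto intro!: continuous_intros simp: case_prod_beta')
    have im: "(\<lambda>(xL, w::real). (fst xL, snd xL * w)) ` ((U \<times> {0..b}) \<times> cbox 0 1) \<subseteq> U \<times> {0..b}"
    proof
      fix y assume "y \<in> (\<lambda>(xL, w::real). (fst xL, snd xL * w)) ` ((U \<times> {0..b}) \<times> cbox 0 1)"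
      then obtain x L w where y: "y = (x, L * w)" and x: "x \<in> U" and L: "0 \<le> L" "L \<le> b" and w: "0 \<le> w" "w \<le> 1"
        by auto
      have "L * w \<le> L * 1" using L w by (intro mult_left_mono) auto
      then show "y \<in> U \<times> {0..b}" using y x L w by auto
    qed
    have "continuous_on ((U \<times> {0..b}) \<times> cbox 0 1) ((\<lambda>(x,t). f x t) \<circ> (\<lambda>(xL, w::real). (fst xL, snd xL * w)))"
      by (rule continuous_on_compose[OF m continuous_on_subset[OF fc im]])
    then show ?thesis by (simp add: o_def case_prod_beta')
  qed
  have c2: "continuous_on (U \<times> {0..b}) (\<lambda>xL. integral (cbox 0 1) (\<lambda>w. f (fst xL) (snd xL * w)))"
    using integral_continuous_on_param[OF c1] by simp
  have c3: "continuous_on (U \<times> {0..b}) (\<lambda>xL. snd xL * integral (cbox 0 1) (\<lambda>w. f (fst xL) (snd xL * w)))"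
    by (intro continuous_intros c2)
  show ?thesis
  proof (rule continuous_on_eq[OF c3])
    fix xL assume "xL \<in> U \<times> {0..b}"
    then have "0 \<le> snd xL" by auto
    then show "snd xL * integral (cbox 0 1) (\<lambda>w. f (fst xL) (snd xL * w)) = (case xL of (x, L) \<Rightarrow> integral {0..L} (f x))"
      using integral_rescale01[of "snd xL" "f (fst xL)"] by (simp add: case_prod_beta')
  qed
qed


lemma DERIV_cadd: "(f has_real_derivative D) (at x within s) \<Longrightarrow> ((\<lambda>x. c + f x) has_real_derivative D) (at x within s)"
  using DERIV_add[OF DERIV_const[of c]] by simp

locale ana =
  fixes \<delta> fI m0 m1 \<kappa> \<alpha> p \<beta> :: real
  assumes dpos: "\<delta> > 0" and fIpos: "fI > 0" and m1nn: "m1 \<ge> 0" and kpos: "\<kappa> > 0"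
    and apos: "0 < \<alpha>" and alt1: "\<alpha> < 1" and plt1: "p < 1"
begin

definition "Hh h w = h * exp (- \<delta> * w) + fI / \<delta> * (1 - exp (- \<delta> * w))"
definition "Mf x = m0 + m1 * x powr (- \<kappa>)"
definition "Md x = m1 * ((- \<kappa>) * x powr (- \<kappa> - 1))"
definition "Aa h w = integral {0..w} (\<lambda>u. Mf (Hh h u))"
definition "Ah h w = integral {0..w} (\<lambda>u. Md (Hh h u) * exp (- \<delta> * u))"
definition "phi h w = (1 - \<alpha>) * exp (\<beta> * w + (p - 1) * Aa h w) * Hh h w"
definition "phih h w = (1 - \<alpha>) * exp (\<beta> * w + (p - 1) * Aa h w) * ((p - 1) * Ah h w * Hh h w + exp (- \<delta> * w))"
definition "Phi h L = integral {0..L} (phi h)"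
definition "Psi h L = integral {0..L} (phih h)"

lemma Hpos: assumes "h > 0" "0 \<le> w" shows "Hh h w > 0"
proof -
  have e: "exp (- \<delta> * w) \<le> 1" using dpos assms by simp
  have "fI / \<delta> * (1 - exp (- \<delta> * w)) \<ge> 0" using e fIpos dpos by simp
  moreover have "h * exp (- \<delta> * w) > 0" using assms by simp
  ultimately show ?thesis unfolding Hh_def by linarith
qed

lemma Hpos': "x \<in> {0<..} \<times> {0..b} \<Longrightarrow> Hh (fst x) (snd x) > 0"
  using Hpos by (auto simp: mem_Times_iff)

lemma cH: "continuous_on S (\<lambda>x. Hh (fst x) (snd x))"
  unfolding Hh_def by (intro continuous_intros)

lemma cMf: "continuous_on ({0<..} \<times> {0..b}) (\<lambda>x. Mf (Hh (fst x) (snd x)))"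
  unfolding Mf_def
  by (intro continuous_intros cH) (use Hpos' in force)

lemma cMd: "continuous_on ({0<..} \<times> {0..b}) (\<lambda>x. Md (Hh (fst x) (snd x)) * exp (- \<delta> * snd x))"
  unfolding Md_def
  by (intro continuous_intros cH) (use Hpos' in force)

lemma cAa: "continuous_on ({0<..} \<times> {0..b}) (\<lambda>x. Aa (fst x) (snd x))"
  using param_indef[of "{0<..}" b "\<lambda>h u. Mf (Hh h u)"] cMf[of b]
  unfolding Aa_def by (simp add: case_prod_beta')

lemma cAh: "continuous_on ({0<..} \<times> {0..b}) (\<lambda>x. Ah (fst x) (snd x))"
  using param_indef[of "{0<..}" b "\<lambda>h u. Md (Hh h u) * exp (- \<delta> * u)"] cMd[of b]
  unfolding Ah_def by (simp add: case_prod_beta')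

lemma cphi: "continuous_on ({0<..} \<times> {0..b}) (\<lambda>x. phi (fst x) (snd x))"
  unfolding phi_def by (intro continuous_intros cAa cH)

lemma cphih: "continuous_on ({0<..} \<times> {0..b}) (\<lambda>x. phih (fst x) (snd x))"
  unfolding phih_def by (intro continuous_intros cAa cAh cH)

lemma cPsi: "continuous_on ({0<..} \<times> {0..b}) (\<lambda>x. Psi (fst x) (snd x))"
  using param_indef[of "{0<..}" b "\<lambda>h u. phih h u"] cphih[of b]
  unfolding Psi_def by (simp add: case_prod_beta')

lemma cut1: "continuous_on ({0<..} \<times> {0..b}) (\<lambda>x. f (fst x) (snd x)) \<Longrightarrow> h > 0 \<Longrightarrow>
   continuous_on {0..b} (f h)"
proof -
  assume c: "continuous_on ({0<..} \<times> {0..b}) (\<lambda>x. f (fst x) (snd x))" and h: "h > 0"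
  have "continuous_on {0..b} ((\<lambda>x. f (fst x) (snd x)) \<circ> (\<lambda>w. (h, w)))"
    by (rule continuous_on_compose[OF _ continuous_on_subset[OF c]]) (auto intro!: continuous_intros simp: h)
  then show ?thesis by (simp add: o_def)
qed

lemma dH: "((\<lambda>h. Hh h u) has_field_derivative exp (- \<delta> * u)) (at h)"
  unfolding Hh_def by (auto intro!: derivative_eq_intros)

lemma dMfH: assumes "Hh h u > 0"
  shows "((\<lambda>h. Mf (Hh h u)) has_field_derivative Md (Hh h u) * exp (- \<delta> * u)) (at h)"
proof -
  have d1: "((\<lambda>h. (Hh h u) powr (- \<kappa>)) has_real_derivative ((- \<kappa>) * (Hh h u) powr (- \<kappa> - 1)) * exp (- \<delta> * u)) (at h)"
    by (rule DERIV_chain2[OF has_real_derivative_powr[OF assms] dH])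
  have "((\<lambda>h. m0 + m1 * (Hh h u) powr (- \<kappa>)) has_real_derivative m1 * (((- \<kappa>) * (Hh h u) powr (- \<kappa> - 1)) * exp (- \<delta> * u))) (at h)"
    by (rule DERIV_cadd[OF DERIV_cmult[OF d1]])
  then show ?thesis unfolding Mf_def Md_def by (rule DERIV_cong) (simp add: algebra_simps)
qed

lemma derA: assumes h: "h > 0" and w: "0 \<le> w"
  shows "((\<lambda>h. Aa h w) has_field_derivative Ah h w) (at h)"
proof -
  have "((\<lambda>h. integral (cbox 0 w) (\<lambda>u. Mf (Hh h u))) has_field_derivative
         integral (cbox 0 w) (\<lambda>u. Md (Hh h u) * exp (- \<delta> * u))) (at h within {0<..})"
  proof (rule leibniz_rule_field_derivative)
    fix x t :: real assume x: "x \<in> {0<..}" and t: "t \<in> cbox (0::real) w"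
    have "Hh x t > 0" using x t Hpos by auto
    then show "((\<lambda>x. Mf (Hh x t)) has_field_derivative Md (Hh x t) * exp (- \<delta> * t)) (at x within {0<..})"
      using dMfH has_field_derivative_at_within by blast
  next
    fix x :: real assume x: "x \<in> {0<..}"
    show "(\<lambda>u. Mf (Hh x u)) integrable_on cbox 0 w"
      using cut1[OF cMf[of w], of x] x by (auto intro: integrable_continuous_real)
  next
    show "continuous_on ({0<..} \<times> cbox 0 w) (\<lambda>(x, t). Md (Hh x t) * exp (- \<delta> * t))"
      using cMd[of w] by (simp add: case_prod_beta')
  qed (use h in auto)
  then show ?thesis unfolding Aa_def Ah_def using at_within_open[of h "{0<..}"] h by simp
qed

lemma derphi: assumes h: "h > 0" and w: "0 \<le> w"
  shows "((\<lambda>h. phi h w) has_field_derivative phih h w) (at h)"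
proof -
  have d1: "((\<lambda>h. \<beta> * w + (p - 1) * Aa h w) has_real_derivative (p - 1) * Ah h w) (at h)"
    by (rule DERIV_cadd[OF DERIV_cmult[OF derA[OF h w]]])
  have d2: "((\<lambda>h. exp (\<beta> * w + (p - 1) * Aa h w)) has_real_derivative exp (\<beta> * w + (p - 1) * Aa h w) * ((p - 1) * Ah h w)) (at h)"
    by (rule DERIV_chain2[OF DERIV_exp d1])
  have d3: "((\<lambda>h. exp (\<beta> * w + (p - 1) * Aa h w) * Hh h w) has_real_derivative
     exp (\<beta> * w + (p - 1) * Aa h w) * ((p - 1) * Ah h w) * Hh h w + exp (\<beta> * w + (p - 1) * Aa h w) * exp (- \<delta> * w)) (at h)"
    by (rule DERIV_cong[OF DERIV_mult[OF d2 dH]]) (simp add: algebra_simps)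
  have d4: "((\<lambda>h. (1 - \<alpha>) * (exp (\<beta> * w + (p - 1) * Aa h w) * Hh h w)) has_real_derivative
     (1 - \<alpha>) * (exp (\<beta> * w + (p - 1) * Aa h w) * ((p - 1) * Ah h w) * Hh h w + exp (\<beta> * w + (p - 1) * Aa h w) * exp (- \<delta> * w))) (at h)"
    by (rule DERIV_cmult[OF d3])
  have e1: "(\<lambda>h. phi h w) = (\<lambda>h. (1 - \<alpha>) * (exp (\<beta> * w + (p - 1) * Aa h w) * Hh h w))"
    by (simp add: phi_def fun_eq_iff)
  have e2: "(1 - \<alpha>) * (exp (\<beta> * w + (p - 1) * Aa h w) * ((p - 1) * Ah h w) * Hh h w + exp (\<beta> * w + (p - 1) * Aa h w) * exp (- \<delta> * w)) = phih h w"
    unfolding phih_def by (simp add: algebra_simps)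
  show ?thesis unfolding e1 by (rule DERIV_cong[OF d4 e2])
qed

lemma derPhi: assumes h: "h > 0" and L: "0 \<le> L"
  shows "((\<lambda>h. Phi h L) has_field_derivative Psi h L) (at h)"
proof -
  have "((\<lambda>h. integral (cbox 0 L) (phi h)) has_field_derivative
         integral (cbox 0 L) (phih h)) (at h within {0<..})"
  proof (rule leibniz_rule_field_derivative)
    fix x t :: real assume x: "x \<in> {0<..}" and t: "t \<in> cbox (0::real) L"
    have "x > 0" "0 \<le> t" using x t by auto
    then show "((\<lambda>x. phi x t) has_field_derivative phih x t) (at x within {0<..})"
      by (rule has_field_derivative_at_within[OF derphi])
  next
    fix x :: real assume x: "x \<in> {0<..}"
    show "phi x integrable_on cbox 0 L"
      using cut1[OF cphi[of L], of x] x by (auto intro: integrable_continuous_real)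
  next
    show "continuous_on ({0<..} \<times> cbox 0 L) (\<lambda>(x, t). phih x t)"
      using cphih[of L] by (simp add: case_prod_beta')
  qed (use h in auto)
  then show ?thesis unfolding Phi_def Psi_def using at_within_open[of h "{0<..}"] h by simp
qed

lemma Ah_nonpos: assumes "h > 0" "0 \<le> w" shows "Ah h w \<le> 0"
proof -
  have i: "(\<lambda>u. Md (Hh h u) * exp (- \<delta> * u)) integrable_on {0..w}"
    using cut1[OF cMd[of w], of h] assms by (auto intro: integrable_continuous_real)
  have "integral {0..w} (\<lambda>u. - (Md (Hh h u) * exp (- \<delta> * u))) \<ge> 0"
  proof (rule integral_nonneg)
    show "(\<lambda>u. - (Md (Hh h u) * exp (- \<delta> * u))) integrable_on {0..w}" using integrable_neg[OF i] by simp
    fix u assume "u \<in> {0..w}"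
    have "Md (Hh h u) \<le> 0" unfolding Md_def using m1nn kpos
      by (simp add: mult_nonneg_nonneg mult_nonpos_nonneg)
    then show "0 \<le> - (Md (Hh h u) * exp (- \<delta> * u))" by (simp add: mult_nonpos_nonneg)
  qed
  then show ?thesis unfolding Ah_def by (simp add: integral_neg)
qed

lemma phih_nonneg: assumes "h > 0" "0 \<le> w" shows "phih h w \<ge> 0"
proof -
  have "(p - 1) * Ah h w \<ge> 0" using plt1 Ah_nonpos[OF assms] by (simp add: mult_nonpos_nonpos)
  then have "(p - 1) * Ah h w * Hh h w \<ge> 0" using Hpos[OF assms] by simp
  then have "(p - 1) * Ah h w * Hh h w + exp (- \<delta> * w) \<ge> 0" by (simp add: add_nonneg_pos less_imp_le)
  then show ?thesis unfolding phih_def using alt1 by simp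
qed

lemma Psi_nonneg: assumes "h > 0" "0 \<le> L" shows "Psi h L \<ge> 0"
  unfolding Psi_def
proof (rule integral_nonneg)
  show "phih h integrable_on {0..L}"
    using cut1[OF cphih[of L], of h] assms by (auto intro: integrable_continuous_real)
  fix w assume "w \<in> {0..L}" then show "0 \<le> phih h w" using phih_nonneg assms by auto
qed

end

locale main = bmset M F B + ana \<delta> fI m0 m1 \<kappa> \<alpha> p \<beta>
  for M :: "'a measure" and F B \<delta> fI m0 m1 \<kappa> \<alpha> p \<beta> +
  fixes T r \<mu> \<sigma> \<rho> I t h \<theta> :: real
  assumes p_def: "p = \<alpha> / (\<alpha> - 1)" and th_def: "\<theta> = theta \<mu> r \<sigma>"
    and beta_def: "\<beta> = - \<rho> + p * (\<rho> - r) - p * \<theta>\<^sup>2 / 2 + p\<^sup>2 * \<theta>\<^sup>2 / 2"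
    and Tpos: "T > 0" and rpos: "r > 0" and Ipos: "I > 0" and t0: "0 \<le> t" and tT: "t < T" and hpos: "h > 0"
begin

lemma shiftI:
  assumes h': "h' > 0" and s: "t' \<le> s"
  shows "integral {t'..s} (\<lambda>u. c + Mfun m0 m1 \<kappa> (H2 \<delta> fI t' h' u)) = c * (s - t') + Aa h' (s - t')"
proof -
  let ?f = "\<lambda>u. c + Mfun m0 m1 \<kappa> (H2 \<delta> fI t' h' u)"
  have "integral {0..s - t'} (?f \<circ> (+) t') = integral {0 + t'..s - t' + t'} ?f"
    by (rule integral_shift_Icc_real)
  then have e1: "integral {t'..s} ?f = integral {0..s - t'} (\<lambda>u. c + Mf (Hh h' u))"
    by (simp add: o_def H2_def Hh_def Mfun_def Mf_def)
  have i: "(\<lambda>u. Mf (Hh h' u)) integrable_on {0..s - t'}"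
    using cut1[OF cMf[of "s - t'"], of h'] h' by (auto intro: integrable_continuous_real)
  have "integral {0..s - t'} (\<lambda>u. c + Mf (Hh h' u)) = integral {0..s - t'} (\<lambda>u. c) + integral {0..s - t'} (\<lambda>u. Mf (Hh h' u))"
    by (rule integral_add[OF integrable_const_ivl i])
  also have "\<dots> = c * (s - t') + Aa h' (s - t')"
    using s unfolding Aa_def by simp
  finally show ?thesis using e1 by simp
qed

lemma theta_eq: "theta \<mu> r \<sigma> = \<theta>" using th_def by simp

lemma H2_eq: "H2 \<delta> fI t' h' s = Hh h' (s - t')"
  unfolding H2_def Hh_def by simp

lemma pw_W:
  assumes h': "h' > 0" and s: "t' \<le> s" and z: "z > 0"
  shows "exp (- integral {t'..s} (\<lambda>u. \<rho> + Mfun m0 m1 \<kappa> (H2 \<delta> fI t' h' u)))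
         * u_hat \<alpha> (Z2 B r \<mu> \<sigma> \<rho> m0 m1 \<kappa> \<delta> fI t' z h' s \<omega>) (H2 \<delta> fI t' h' s)
       = (z / \<alpha>) powr p * ((1 - \<alpha>) * exp (- \<rho> * (s - t') - Aa h' (s - t'))
            * exp (p * ((\<rho> - r) * (s - t') + Aa h' (s - t') - \<theta>\<^sup>2 / 2 * (s - t'))) * Hh h' (s - t'))
         * exp ((- p * \<theta>) * (B s \<omega> - B t' \<omega>))"
proof -
  define w where "w = s - t'"
  define A where "A = Aa h' w"
  define X where "X = (\<rho> - r) * w + A - \<theta> * (B s \<omega> - B t' \<omega>) - \<theta>\<^sup>2 / 2 * w"
  have i1: "integral {t'..s} (\<lambda>u. \<rho> + Mfun m0 m1 \<kappa> (H2 \<delta> fI t' h' u)) = \<rho> * w + A"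
    using shiftI[OF h' s, of \<rho>] unfolding w_def A_def .
  have i2: "integral {t'..s} (\<lambda>u. \<rho> - r + Mfun m0 m1 \<kappa> (H2 \<delta> fI t' h' u)) = (\<rho> - r) * w + A"
    using shiftI[OF h' s, of "\<rho> - r"] unfolding w_def A_def .
  have Z: "Z2 B r \<mu> \<sigma> \<rho> m0 m1 \<kappa> \<delta> fI t' z h' s \<omega> = z * exp X"
    unfolding Z2_def i2 X_def theta_eq w_def by simp
  have pw: "(z * exp X / \<alpha>) powr p = (z / \<alpha>) powr p * exp (X * p)"
  proof -
    have "(z * exp X / \<alpha>) = (z / \<alpha>) * exp X" by simp
    then have "(z * exp X / \<alpha>) powr p = (z / \<alpha>) powr p * exp X powr p"
      by (simp only: powr_mult)
    then show ?thesis by (simp only: exp_powr_real)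
  qed
  have lhs: "exp (- integral {t'..s} (\<lambda>u. \<rho> + Mfun m0 m1 \<kappa> (H2 \<delta> fI t' h' u)))
         * u_hat \<alpha> (Z2 B r \<mu> \<sigma> \<rho> m0 m1 \<kappa> \<delta> fI t' z h' s \<omega>) (H2 \<delta> fI t' h' s)
      = (z / \<alpha>) powr p * (1 - \<alpha>) * Hh h' w * (exp (- (\<rho> * w + A)) * exp (X * p))"
    unfolding i1 Z
    unfolding u_hat_def H2_eq w_def[symmetric] p_def[symmetric] pw by (simp add: algebra_simps)
  have rhs: "(z / \<alpha>) powr p * ((1 - \<alpha>) * exp (- \<rho> * w - A)
            * exp (p * ((\<rho> - r) * w + A - \<theta>\<^sup>2 / 2 * w)) * Hh h' w)
         * exp ((- p * \<theta>) * (B s \<omega> - B t' \<omega>))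
      = (z / \<alpha>) powr p * (1 - \<alpha>) * Hh h' w * (exp (- \<rho> * w - A) *
            exp (p * ((\<rho> - r) * w + A - \<theta>\<^sup>2 / 2 * w)) * exp ((- p * \<theta>) * (B s \<omega> - B t' \<omega>)))"
    by (simp add: algebra_simps)
  have ex: "exp (- (\<rho> * w + A)) * exp (X * p) = exp (- \<rho> * w - A) *
            exp (p * ((\<rho> - r) * w + A - \<theta>\<^sup>2 / 2 * w)) * exp ((- p * \<theta>) * (B s \<omega> - B t' \<omega>))"
  proof -
    have "- (\<rho> * w + A) + X * p = (- \<rho> * w - A) + p * ((\<rho> - r) * w + A - \<theta>\<^sup>2 / 2 * w) + (- p * \<theta>) * (B s \<omega> - B t' \<omega>)"
      unfolding X_def by (simp add: algebra_simps)
    then show ?thesis by (simp add: exp_add[symmetric])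
  qed
  show ?thesis using lhs rhs ex unfolding w_def[symmetric] A_def[symmetric] by simp
qed

lemma cont_shift:
  assumes c: "continuous_on ({0<..} \<times> {0..T - t'}) (\<lambda>x. f (fst x) (snd x))" and h': "h' > 0"
  shows "continuous_on {t'..T} (\<lambda>s. f h' (s - t'))"
proof (rule continuous_on_compose2[OF cut1[OF c h']])
  show "continuous_on {t'..T} (\<lambda>s. s - t')" by (intro continuous_intros)
  show "(\<lambda>s. s - t') ` {t'..T} \<subseteq> {0..T - t'}" by auto
qed

lemma shift_int: "t' \<le> T \<Longrightarrow> integral {t'..T} (\<lambda>s. f (s - t')) = integral {0..T - t'} f"
proof -
  assume "t' \<le> T"
  have "integral {0..T - t'} ((\<lambda>s. f (s - t')) \<circ> (+) t') = integral {0 + t'..T - t' + t'} (\<lambda>s. f (s - t'))"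
    by (rule integral_shift_Icc_real)
  then show ?thesis by (simp add: o_def)
qed

lemma W_eq:
  assumes t': "0 \<le> t'" "t' \<le> T" and z: "z > 0" and h': "h' > 0"
  shows "W M B T r \<mu> \<sigma> \<rho> m0 m1 \<kappa> \<delta> \<alpha> fI t' z h' = (z / \<alpha>) powr p * Phi h' (T - t')"
proof -
  define g where "g s = (z / \<alpha>) powr p * ((1 - \<alpha>) * exp (- \<rho> * (s - t') - Aa h' (s - t'))
            * exp (p * ((\<rho> - r) * (s - t') + Aa h' (s - t') - \<theta>\<^sup>2 / 2 * (s - t'))) * Hh h' (s - t'))" for s
  have cA: "continuous_on {t'..T} (\<lambda>s. Aa h' (s - t'))" by (rule cont_shift[OF cAa h'])
  have cHs: "continuous_on {t'..T} (\<lambda>s. Hh h' (s - t'))" unfolding Hh_def by (intro continuous_intros)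
  have gc: "continuous_on {t'..T} g" unfolding g_def by (intro continuous_intros cA cHs)
  have "W M B T r \<mu> \<sigma> \<rho> m0 m1 \<kappa> \<delta> \<alpha> fI t' z h'
     = (\<integral>\<omega>. integral {t'..T} (\<lambda>s. g s * exp ((- p * \<theta>) * (B s \<omega> - B t' \<omega>))) \<partial>M)"
    unfolding W_def
  proof (rule Bochner_Integration.integral_cong[OF refl], rule integral_cong)
    fix \<omega> s assume "s \<in> {t'..T}"
    then have "t' \<le> s" by simp
    then show "exp (- integral {t'..s} (\<lambda>u. \<rho> + Mfun m0 m1 \<kappa> (H2 \<delta> fI t' h' u)))
         * u_hat \<alpha> (Z2 B r \<mu> \<sigma> \<rho> m0 m1 \<kappa> \<delta> fI t' z h' s \<omega>) (H2 \<delta> fI t' h' s)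
       = g s * exp ((- p * \<theta>) * (B s \<omega> - B t' \<omega>))"
      unfolding g_def by (rule pw_W[OF h' _ z])
  qed
  also have "\<dots> = integral {t'..T} (\<lambda>s. g s * exp ((- p * \<theta>)\<^sup>2 * (s - t') / 2))"
    by (rule FL(2)[OF t'(1) order_refl t'(2) gc])
  also have "\<dots> = integral {t'..T} (\<lambda>s. (z / \<alpha>) powr p * phi h' (s - t'))"
  proof (rule integral_cong)
    fix s
    have "(- \<rho> * (s - t') - Aa h' (s - t')) + p * ((\<rho> - r) * (s - t') + Aa h' (s - t') - \<theta>\<^sup>2 / 2 * (s - t'))
          + (- p * \<theta>)\<^sup>2 * (s - t') / 2 = \<beta> * (s - t') + (p - 1) * Aa h' (s - t')"
      unfolding beta_def by (simp add: algebra_simps power2_eq_square)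
    then have "exp (- \<rho> * (s - t') - Aa h' (s - t')) * exp (p * ((\<rho> - r) * (s - t') + Aa h' (s - t') - \<theta>\<^sup>2 / 2 * (s - t')))
          * exp ((- p * \<theta>)\<^sup>2 * (s - t') / 2) = exp (\<beta> * (s - t') + (p - 1) * Aa h' (s - t'))"
      by (simp add: exp_add[symmetric])
    then show "g s * exp ((- p * \<theta>)\<^sup>2 * (s - t') / 2) = (z / \<alpha>) powr p * phi h' (s - t')"
      unfolding g_def phi_def by (simp add: algebra_simps)
  qed
  also have "\<dots> = (z / \<alpha>) powr p * integral {t'..T} (\<lambda>s. phi h' (s - t'))" by simp
  also have "\<dots> = (z / \<alpha>) powr p * Phi h' (T - t')"
    unfolding Phi_def using shift_int[OF t'(2), of "phi h'"] by simp
  finally show ?thesis .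
qed

lemma Wh_eq:
  assumes t': "0 \<le> t'" "t' \<le> T" and z: "z > 0" and h': "h' > 0"
  shows "W_h M B T r \<mu> \<sigma> \<rho> m0 m1 \<kappa> \<delta> \<alpha> fI t' z h' = (z / \<alpha>) powr p * Psi h' (T - t')"
proof -
  have L: "0 \<le> T - t'" using t' by simp
  have d: "((\<lambda>x. (z / \<alpha>) powr p * Phi x (T - t')) has_field_derivative (z / \<alpha>) powr p * Psi h' (T - t')) (at h')"
    by (rule DERIV_cmult[OF derPhi[OF h' L]])
  have "((\<lambda>x. W M B T r \<mu> \<sigma> \<rho> m0 m1 \<kappa> \<delta> \<alpha> fI t' z x) has_field_derivative (z / \<alpha>) powr p * Psi h' (T - t')) (at h')"
  proof (rule has_field_derivative_transform_within_open[OF d open_greaterThan])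
    show "h' \<in> {0<..}" using h' by simp
    fix x :: real assume "x \<in> {0<..}"
    then show "(z / \<alpha>) powr p * Phi x (T - t') = W M B T r \<mu> \<sigma> \<rho> m0 m1 \<kappa> \<delta> \<alpha> fI t' z x"
      using W_eq[OF t' z] by simp
  qed
  then show ?thesis unfolding W_h_def by (rule DERIV_imp_deriv)
qed

definition "Ahat s = integral {0..s} (\<lambda>u. \<rho> + Mfun m0 m1 \<kappa> (H1 \<delta> h u))"

lemma H1pos: "H1 \<delta> h s > 0" unfolding H1_def using hpos by simp

lemma cAhat: "continuous_on {0..T} Ahat"
proof -
  have "continuous_on {0..T} (\<lambda>u. \<rho> + Mfun m0 m1 \<kappa> (H1 \<delta> h u))"
    unfolding Mfun_def H1_def by (intro continuous_intros) (use hpos in simp)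
  then have "(\<lambda>u. \<rho> + Mfun m0 m1 \<kappa> (H1 \<delta> h u)) integrable_on {0..T}"
    by (rule integrable_continuous_real)
  then show ?thesis unfolding Ahat_def by (rule indefinite_integral_continuous_1)
qed

lemma Z1_eq: "Z1 B r \<mu> \<sigma> \<rho> m0 m1 \<kappa> \<delta> z h s \<omega> = z * exp (- (r + \<theta>\<^sup>2 / 2) * s - \<theta> * B s \<omega> + Ahat s)"
  unfolding Z1_def theta_eq Ahat_def by simp

definition "g2 s = exp (- Ahat s) * fI * exp (p * (- (r + \<theta>\<^sup>2 / 2) * s + Ahat s)) * Psi (H1 \<delta> h s) (T - (t + s))"

lemma Rterm:
  assumes z: "z > 0" and w: "\<omega> \<in> space M" and s: "0 \<le> s" "s \<le> T - t"
  shows "exp (- integral {0..s} (\<lambda>u. \<rho> + Mfun m0 m1 \<kappa> (H1 \<delta> h u))) * fI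
         * W_h M B T r \<mu> \<sigma> \<rho> m0 m1 \<kappa> \<delta> \<alpha> fI (t + s) (Z1 B r \<mu> \<sigma> \<rho> m0 m1 \<kappa> \<delta> z h s \<omega>) (H1 \<delta> h s)
       = ((z / \<alpha>) powr p * g2 s) * exp ((- p * \<theta>) * (B s \<omega> - B 0 \<omega>))"
    and "0 \<le> exp (- integral {0..s} (\<lambda>u. \<rho> + Mfun m0 m1 \<kappa> (H1 \<delta> h u))) * fI
         * W_h M B T r \<mu> \<sigma> \<rho> m0 m1 \<kappa> \<delta> \<alpha> fI (t + s) (Z1 B r \<mu> \<sigma> \<rho> m0 m1 \<kappa> \<delta> z h s \<omega>) (H1 \<delta> h s)"
proof -
  define X where "X = - (r + \<theta>\<^sup>2 / 2) * s - \<theta> * B s \<omega> + Ahat s"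
  have Zp: "z * exp X > 0" using z by simp
  have ts: "0 \<le> t + s" "t + s \<le> T" using s t0 by auto
  have Wh: "W_h M B T r \<mu> \<sigma> \<rho> m0 m1 \<kappa> \<delta> \<alpha> fI (t + s) (Z1 B r \<mu> \<sigma> \<rho> m0 m1 \<kappa> \<delta> z h s \<omega>) (H1 \<delta> h s)
     = (z * exp X / \<alpha>) powr p * Psi (H1 \<delta> h s) (T - (t + s))"
    unfolding Z1_eq X_def[symmetric] by (rule Wh_eq[OF ts Zp H1pos])
  have pw: "(z * exp X / \<alpha>) powr p = (z / \<alpha>) powr p * exp (X * p)"
  proof -
    have "(z * exp X / \<alpha>) = (z / \<alpha>) * exp X" by simp
    then have "(z * exp X / \<alpha>) powr p = (z / \<alpha>) powr p * exp X powr p"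
      by (simp only: powr_mult)
    then show ?thesis by (simp only: exp_powr_real)
  qed
  have ex: "exp (X * p) = exp (p * (- (r + \<theta>\<^sup>2 / 2) * s + Ahat s)) * exp ((- p * \<theta>) * (B s \<omega> - B 0 \<omega>))"
  proof -
    have "X * p = p * (- (r + \<theta>\<^sup>2 / 2) * s + Ahat s) + (- p * \<theta>) * (B s \<omega> - B 0 \<omega>)"
      unfolding X_def B0[OF w] by (simp add: algebra_simps)
    then show ?thesis by (simp add: exp_add[symmetric])
  qed
  show "exp (- integral {0..s} (\<lambda>u. \<rho> + Mfun m0 m1 \<kappa> (H1 \<delta> h u))) * fI
         * W_h M B T r \<mu> \<sigma> \<rho> m0 m1 \<kappa> \<delta> \<alpha> fI (t + s) (Z1 B r \<mu> \<sigma> \<rho> m0 m1 \<kappa> \<delta> z h s \<omega>) (H1 \<delta> h s)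
       = ((z / \<alpha>) powr p * g2 s) * exp ((- p * \<theta>) * (B s \<omega> - B 0 \<omega>))"
    unfolding Wh pw ex g2_def Ahat_def[symmetric] by (simp add: algebra_simps)
  have "Psi (H1 \<delta> h s) (T - (t + s)) \<ge> 0" using Psi_nonneg[OF H1pos] ts by simp
  then show "0 \<le> exp (- integral {0..s} (\<lambda>u. \<rho> + Mfun m0 m1 \<kappa> (H1 \<delta> h u))) * fI
         * W_h M B T r \<mu> \<sigma> \<rho> m0 m1 \<kappa> \<delta> \<alpha> fI (t + s) (Z1 B r \<mu> \<sigma> \<rho> m0 m1 \<kappa> \<delta> z h s \<omega>) (H1 \<delta> h s)"
    unfolding Wh using fIpos by simp
qed

lemma cg2: "continuous_on {0..T - t} g2"
proof -
  have cA: "continuous_on {0..T - t} Ahat" by (rule continuous_on_subset[OF cAhat]) (use t0 in auto)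
  have cP: "continuous_on {0..T - t} (\<lambda>s. Psi (H1 \<delta> h s) (T - (t + s)))"
  proof (rule continuous_on_compose2[OF cPsi[of T], where f="\<lambda>s. (H1 \<delta> h s, T - (t + s))", simplified])
    show "continuous_on {0..T - t} (\<lambda>s. (H1 \<delta> h s, T - (t + s)))"
      unfolding H1_def by (intro continuous_intros)
    show "(\<lambda>s. (H1 \<delta> h s, T - (t + s))) ` {0..T - t} \<subseteq> {0<..} \<times> {0..T}"
      using H1pos t0 by auto
  qed
  show ?thesis unfolding g2_def by (intro continuous_intros cA cP)
qed

definition "g1 z s = I * z * exp (- r * s - \<theta>\<^sup>2 / 2 * s)"
definition "cc = integral {0..T - t} (\<lambda>s. exp (- r * s))"

lemma cg1: "continuous_on {0..T - t} (g1 z)"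
  unfolding g1_def by (intro continuous_intros)

lemma q_eq: "\<omega> \<in> space M \<Longrightarrow> I * z * exp (- r * s - \<theta> * B s \<omega> - \<theta>\<^sup>2 / 2 * s) = g1 z s * exp ((- \<theta>) * (B s \<omega> - B 0 \<omega>))"
proof -
  assume w: "\<omega> \<in> space M"
  have "- r * s - \<theta> * B s \<omega> - \<theta>\<^sup>2 / 2 * s = (- r * s - \<theta>\<^sup>2 / 2 * s) + (- \<theta>) * (B s \<omega> - B 0 \<omega>)"
    unfolding B0[OF w] by (simp add: algebra_simps)
  then show ?thesis unfolding g1_def by (simp add: exp_add[symmetric])
qed

lemma Tt: "0 \<le> T - t" using tT by simp

lemma Q_int: "integrable M (\<lambda>\<omega>. integral {0..T - t} (\<lambda>s. g1 z s * exp ((- \<theta>) * (B s \<omega> - B 0 \<omega>))))"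
  by (rule FL(1)[OF order_refl order_refl Tt cg1])

lemma Q_val: "(\<integral>\<omega>. integral {0..T - t} (\<lambda>s. g1 z s * exp ((- \<theta>) * (B s \<omega> - B 0 \<omega>))) \<partial>M) = I * z * cc"
proof -
  have "(\<integral>\<omega>. integral {0..T - t} (\<lambda>s. g1 z s * exp ((- \<theta>) * (B s \<omega> - B 0 \<omega>))) \<partial>M)
      = integral {0..T - t} (\<lambda>s. g1 z s * exp ((- \<theta>)\<^sup>2 * (s - 0) / 2))"
    by (rule FL(2)[OF order_refl order_refl Tt cg1])
  also have "\<dots> = integral {0..T - t} (\<lambda>s. I * z * exp (- r * s))"
  proof (rule integral_cong)
    fix s
    have "(- r * s - \<theta>\<^sup>2 / 2 * s) + (- \<theta>)\<^sup>2 * (s - 0) / 2 = - r * s" by (simp add: algebra_simps)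
    then show "g1 z s * exp ((- \<theta>)\<^sup>2 * (s - 0) / 2) = I * z * exp (- r * s)"
      unfolding g1_def by (simp add: mult.assoc exp_add[symmetric])
  qed
  also have "\<dots> = I * z * cc" unfolding cc_def by simp
  finally show ?thesis .
qed

lemma cc_int: "(\<lambda>s. exp (- r * s)) integrable_on {0..T - t}"
  by (intro integrable_continuous_real continuous_intros)

lemma cc_nonneg: "cc \<ge> 0"
  unfolding cc_def by (rule integral_nonneg[OF cc_int]) simp

lemma cc_pos: "cc > 0"
proof -
  have "integral {0..T - t} (\<lambda>s. exp (- r * (T - t))) \<le> cc"
    unfolding cc_def
  proof (rule integral_le)
    show "(\<lambda>s. exp (- r * s)) integrable_on {0..T - t}" by (rule cc_int)
    fix s assume "s \<in> {0..T - t}"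
    then have "- r * (T - t) \<le> - r * s" using rpos by (simp add: mult_left_mono)
    then show "exp (- r * (T - t)) \<le> exp (- r * s)" by simp
  qed (rule integrable_const_ivl)
  moreover have "integral {0..T - t} (\<lambda>s. exp (- r * (T - t))) > 0" using tT by simp
  ultimately show ?thesis by linarith
qed

lemma upper:
  assumes z: "z > 0" and tau: "\<forall>\<omega>\<in>space M. 0 \<le> \<tau> \<omega> \<and> \<tau> \<omega> \<le> T - t"
  shows "(\<integral>\<omega>. integral {0..\<tau> \<omega>} (\<lambda>s.
            I * z * exp (- r * s - \<theta> * B s \<omega> - \<theta>\<^sup>2 / 2 * s)
            - exp (- integral {0..s} (\<lambda>u. \<rho> + Mfun m0 m1 \<kappa> (H1 \<delta> h u))) * fI
              * W_h M B T r \<mu> \<sigma> \<rho> m0 m1 \<kappa> \<delta> \<alpha> fI (t + s)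
                  (Z1 B r \<mu> \<sigma> \<rho> m0 m1 \<kappa> \<delta> z h s \<omega>) (H1 \<delta> h s)) \<partial>M) \<le> I * z * cc"
    (is "(\<integral>\<omega>. ?F \<omega> \<partial>M) \<le> _")
proof -
  define Q where "Q \<omega> = integral {0..T - t} (\<lambda>s. g1 z s * exp ((- \<theta>) * (B s \<omega> - B 0 \<omega>)))" for \<omega>
  have QI: "integrable M Q" unfolding Q_def by (rule Q_int)
  have QV: "(\<integral>\<omega>. Q \<omega> \<partial>M) = I * z * cc" unfolding Q_def by (rule Q_val)
  have pw: "?F \<omega> \<le> Q \<omega>" if w: "\<omega> \<in> space M" for \<omega>
  proof -
    have tw: "0 \<le> \<tau> \<omega>" "\<tau> \<omega> \<le> T - t" using tau w by auto
    define q where "q s = g1 z s * exp ((- \<theta>) * (B s \<omega> - B 0 \<omega>))" for s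
    have cB: "continuous_on {0..T - t} (\<lambda>s. B s \<omega>)"
      using continuous_on_subset[OF Bcont[OF w]] by auto
    have cq: "continuous_on {0..T - t} q" unfolding q_def by (intro continuous_intros cg1 cB)
    have qnn: "0 \<le> q s" for s unfolding q_def g1_def using Ipos z by simp
    have qi: "q integrable_on {0..T - t}" by (rule integrable_continuous_real[OF cq])
    have qi': "q integrable_on {0..\<tau> \<omega>}"
      by (rule integrable_on_subinterval[OF qi]) (use tw in auto)
    have Qq: "Q \<omega> = integral {0..T - t} q" unfolding Q_def q_def ..
    have "integral {0..\<tau> \<omega>} q \<le> integral {0..T - t} q"
      by (rule integral_subset_le[OF _ qi' qi]) (use tw qnn in auto)
    moreover have "?F \<omega> \<le> integral {0..\<tau> \<omega>} q"
    proof (cases "(\<lambda>s. I * z * exp (- r * s - \<theta> * B s \<omega> - \<theta>\<^sup>2 / 2 * s)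
            - exp (- integral {0..s} (\<lambda>u. \<rho> + Mfun m0 m1 \<kappa> (H1 \<delta> h u))) * fI
              * W_h M B T r \<mu> \<sigma> \<rho> m0 m1 \<kappa> \<delta> \<alpha> fI (t + s)
                  (Z1 B r \<mu> \<sigma> \<rho> m0 m1 \<kappa> \<delta> z h s \<omega>) (H1 \<delta> h s)) integrable_on {0..\<tau> \<omega>}")
      case True
      show ?thesis
      proof (rule integral_le[OF True qi'])
        fix s assume s: "s \<in> {0..\<tau> \<omega>}"
        then have s': "0 \<le> s" "s \<le> T - t" using tw by auto
        show "I * z * exp (- r * s - \<theta> * B s \<omega> - \<theta>\<^sup>2 / 2 * s)
            - exp (- integral {0..s} (\<lambda>u. \<rho> + Mfun m0 m1 \<kappa> (H1 \<delta> h u))) * fI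
              * W_h M B T r \<mu> \<sigma> \<rho> m0 m1 \<kappa> \<delta> \<alpha> fI (t + s)
                  (Z1 B r \<mu> \<sigma> \<rho> m0 m1 \<kappa> \<delta> z h s \<omega>) (H1 \<delta> h s) \<le> q s"
          using Rterm(2)[OF z w s'] q_eq[OF w, of z s] unfolding q_def by linarith
      qed
    next
      case False
      then have "?F \<omega> = 0" by (rule not_integrable_integral)
      moreover have "integral {0..\<tau> \<omega>} q \<ge> 0" by (rule integral_nonneg[OF qi']) (use qnn in auto)
      ultimately show ?thesis by simp
    qed
    ultimately show ?thesis unfolding Qq by linarith
  qed
  show ?thesis
  proof (cases "integrable M ?F")
    case True
    have "(\<integral>\<omega>. ?F \<omega> \<partial>M) \<le> (\<integral>\<omega>. Q \<omega> \<partial>M)"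
      by (rule integral_mono[OF True QI pw])
    then show ?thesis unfolding QV .
  next
    case False
    then have "(\<integral>\<omega>. ?F \<omega> \<partial>M) = 0" by (rule not_integrable_integral_eq)
    then show ?thesis using cc_nonneg Ipos z by simp
  qed
qed

definition "C2 = integral {0..T - t} (\<lambda>s. g2 s * exp ((- p * \<theta>)\<^sup>2 * (s - 0) / 2))"

lemma lower_eq:
  assumes z: "z > 0"
  shows "(\<integral>\<omega>. integral {0..T - t} (\<lambda>s.
            I * z * exp (- r * s - \<theta> * B s \<omega> - \<theta>\<^sup>2 / 2 * s)
            - exp (- integral {0..s} (\<lambda>u. \<rho> + Mfun m0 m1 \<kappa> (H1 \<delta> h u))) * fI
              * W_h M B T r \<mu> \<sigma> \<rho> m0 m1 \<kappa> \<delta> \<alpha> fI (t + s)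
                  (Z1 B r \<mu> \<sigma> \<rho> m0 m1 \<kappa> \<delta> z h s \<omega>) (H1 \<delta> h s)) \<partial>M) = I * z * cc - (z / \<alpha>) powr p * C2"
    (is "(\<integral>\<omega>. ?F \<omega> \<partial>M) = _")
proof -
  define Q where "Q \<omega> = integral {0..T - t} (\<lambda>s. g1 z s * exp ((- \<theta>) * (B s \<omega> - B 0 \<omega>)))" for \<omega>
  have QI: "integrable M Q" unfolding Q_def by (rule Q_int)
  have QV: "(\<integral>\<omega>. Q \<omega> \<partial>M) = I * z * cc" unfolding Q_def by (rule Q_val)
  define R where "R \<omega> = integral {0..T - t} (\<lambda>s. ((z / \<alpha>) powr p * g2 s) * exp ((- p * \<theta>) * (B s \<omega> - B 0 \<omega>)))" for \<omega>
  have cgz: "continuous_on {0..T - t} (\<lambda>s. (z / \<alpha>) powr p * g2 s)" by (intro continuous_intros cg2)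
  have RI: "integrable M R" unfolding R_def by (rule FL(1)[OF order_refl order_refl Tt cgz])
  have "(\<integral>\<omega>. R \<omega> \<partial>M) = integral {0..T - t} (\<lambda>s. ((z / \<alpha>) powr p * g2 s) * exp ((- p * \<theta>)\<^sup>2 * (s - 0) / 2))"
    unfolding R_def by (rule FL(2)[OF order_refl order_refl Tt cgz])
  also have "\<dots> = (z / \<alpha>) powr p * C2" unfolding C2_def by (simp add: mult.assoc)
  finally have RV: "(\<integral>\<omega>. R \<omega> \<partial>M) = (z / \<alpha>) powr p * C2" .
  have pw: "?F \<omega> = Q \<omega> - R \<omega>" if w: "\<omega> \<in> space M" for \<omega>
  proof -
    have cB: "continuous_on {0..T - t} (\<lambda>s. B s \<omega>)"
      using continuous_on_subset[OF Bcont[OF w]] by auto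
    have i1: "(\<lambda>s. g1 z s * exp ((- \<theta>) * (B s \<omega> - B 0 \<omega>))) integrable_on {0..T - t}"
      by (intro integrable_continuous_real continuous_intros cg1 cB)
    have i2: "(\<lambda>s. ((z / \<alpha>) powr p * g2 s) * exp ((- p * \<theta>) * (B s \<omega> - B 0 \<omega>))) integrable_on {0..T - t}"
      by (intro integrable_continuous_real continuous_intros cgz cB)
    have "?F \<omega> = integral {0..T - t} (\<lambda>s. g1 z s * exp ((- \<theta>) * (B s \<omega> - B 0 \<omega>))
                  - ((z / \<alpha>) powr p * g2 s) * exp ((- p * \<theta>) * (B s \<omega> - B 0 \<omega>)))"
    proof (rule integral_cong)
      fix s assume "s \<in> {0..T - t}"
      then have s: "0 \<le> s" "s \<le> T - t" by auto
      show "I * z * exp (- r * s - \<theta> * B s \<omega> - \<theta>\<^sup>2 / 2 * s)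
            - exp (- integral {0..s} (\<lambda>u. \<rho> + Mfun m0 m1 \<kappa> (H1 \<delta> h u))) * fI
              * W_h M B T r \<mu> \<sigma> \<rho> m0 m1 \<kappa> \<delta> \<alpha> fI (t + s)
                  (Z1 B r \<mu> \<sigma> \<rho> m0 m1 \<kappa> \<delta> z h s \<omega>) (H1 \<delta> h s)
          = g1 z s * exp ((- \<theta>) * (B s \<omega> - B 0 \<omega>))
                  - ((z / \<alpha>) powr p * g2 s) * exp ((- p * \<theta>) * (B s \<omega> - B 0 \<omega>))"
        unfolding q_eq[OF w, of z s] Rterm(1)[OF z w s] ..
    qed
    also have "\<dots> = Q \<omega> - R \<omega>" unfolding Q_def R_def by (rule integral_diff[OF i1 i2])
    finally show ?thesis .
  qed
  have "(\<integral>\<omega>. ?F \<omega> \<partial>M) = (\<integral>\<omega>. Q \<omega> - R \<omega> \<partial>M)"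
    by (rule Bochner_Integration.integral_cong[OF refl pw])
  also have "\<dots> = (\<integral>\<omega>. Q \<omega> \<partial>M) - (\<integral>\<omega>. R \<omega> \<partial>M)"
    by (rule Bochner_Integration.integral_diff[OF QI RI])
  finally show ?thesis unfolding QV RV .
qed

abbreviation "JJ z \<equiv> J_hat M F B T r \<mu> \<sigma> \<rho> m0 m1 \<kappa> \<delta> \<alpha> I fI t z h"

lemma J_upper: assumes z: "z > 0" shows "JJ z \<le> ereal (I * z * cc)"
  unfolding J_hat_def theta_eq
proof (rule SUP_least)
  fix \<tau> assume "\<tau> \<in> {\<tau>. stopping_time F \<tau> \<and> (\<forall>\<omega>\<in>space M. 0 \<le> \<tau> \<omega> \<and> \<tau> \<omega> \<le> T - t)}"
  then have tau: "\<forall>\<omega>\<in>space M. 0 \<le> \<tau> \<omega> \<and> \<tau> \<omega> \<le> T - t" by simp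
  show "ereal (\<integral>\<omega>. integral {0..\<tau> \<omega>} (\<lambda>s.
            I * z * exp (- r * s - \<theta> * B s \<omega> - \<theta>\<^sup>2 / 2 * s)
            - exp (- integral {0..s} (\<lambda>u. \<rho> + Mfun m0 m1 \<kappa> (H1 \<delta> h u))) * fI
              * W_h M B T r \<mu> \<sigma> \<rho> m0 m1 \<kappa> \<delta> \<alpha> fI (t + s)
                  (Z1 B r \<mu> \<sigma> \<rho> m0 m1 \<kappa> \<delta> z h s \<omega>) (H1 \<delta> h s)) \<partial>M) \<le> ereal (I * z * cc)"
    using upper[OF z tau] by simp
qed

lemma J_nonneg: "0 \<le> JJ z"
  unfolding J_hat_def theta_eq
proof (rule SUP_upper2)
  show "(\<lambda>_. 0) \<in> {\<tau>. stopping_time F \<tau> \<and> (\<forall>\<omega>\<in>space M. 0 \<le> \<tau> \<omega> \<and> \<tau> \<omega> \<le> T - t)}"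
    using stopping_time_const[of F 0] Tt by simp
qed simp

lemma J_lower: assumes z: "z > 0" shows "ereal (I * z * cc - (z / \<alpha>) powr p * C2) \<le> JJ z"
  unfolding J_hat_def theta_eq
proof (rule SUP_upper2)
  show "(\<lambda>_. T - t) \<in> {\<tau>. stopping_time F \<tau> \<and> (\<forall>\<omega>\<in>space M. 0 \<le> \<tau> \<omega> \<and> \<tau> \<omega> \<le> T - t)}"
    using stopping_time_const[of F "T - t"] Tt by simp
qed (unfold lower_eq[OF z], simp)

lemma lim0: "(JJ \<longlongrightarrow> 0) (at_right 0)"
proof (rule tendsto_sandwich[of "\<lambda>z. 0" _ _ "\<lambda>z. ereal (I * z * cc)"])
  show "\<forall>\<^sub>F z in at_right 0. 0 \<le> JJ z" by (simp add: J_nonneg)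
  show "\<forall>\<^sub>F z in at_right 0. JJ z \<le> ereal (I * z * cc)"
    using eventually_at_right_less[of "0::real"] by eventually_elim (rule J_upper)
  show "((\<lambda>z. 0::ereal) \<longlongrightarrow> 0) (at_right 0)" by simp
  have "((\<lambda>z::real. I * z * cc) \<longlongrightarrow> I * 0 * cc) (at_right 0)"
    by (intro tendsto_intros)
  then show "((\<lambda>z. ereal (I * z * cc)) \<longlongrightarrow> 0) (at_right 0)"
    by (simp add: zero_ereal_def)
qed

lemma powr_small: assumes "z \<ge> \<alpha>" shows "(z / \<alpha>) powr p \<le> 1" "0 \<le> (z / \<alpha>) powr p"
proof -
  have a: "1 \<le> z / \<alpha>" using assms apos by simp
  have pn: "0 \<le> - p" using p_def apos alt1 by (simp add: divide_pos_neg less_imp_le)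
  have "1 \<le> (z / \<alpha>) powr (- p)" by (rule ge_one_powr_ge_zero[OF a pn])
  then show "(z / \<alpha>) powr p \<le> 1"
    using powr_minus[of "z / \<alpha>" "- p"] by (simp add: inverse_le_1_iff)
  show "0 \<le> (z / \<alpha>) powr p" by simp
qed

lemma limInf: "(JJ \<longlongrightarrow> \<infinity>) at_top"
  unfolding tendsto_PInfty
proof
  fix y :: real
  define z0 where "z0 = max \<alpha> ((\<bar>y\<bar> + \<bar>C2\<bar> + 1) / (I * cc))"
  have Icc: "I * cc > 0" using Ipos cc_pos by simp
  have "eventually (\<lambda>z. z \<ge> z0) at_top" by (rule eventually_ge_at_top)
  then show "eventually (\<lambda>z. ereal y < JJ z) at_top"
  proof eventually_elim
    case (elim z)
    then have za: "z \<ge> \<alpha>" and zb: "z \<ge> (\<bar>y\<bar> + \<bar>C2\<bar> + 1) / (I * cc)" unfolding z0_def by auto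
    have z: "z > 0" using za apos by simp
    have "(z / \<alpha>) powr p * C2 \<le> \<bar>C2\<bar>"
    proof -
      have "(z / \<alpha>) powr p * C2 \<le> (z / \<alpha>) powr p * \<bar>C2\<bar>"
        using powr_small(2)[OF za] by (intro mult_left_mono) auto
      also have "\<dots> \<le> 1 * \<bar>C2\<bar>" using powr_small(1)[OF za] by (intro mult_right_mono) auto
      finally show ?thesis by simp
    qed
    moreover have "I * z * cc \<ge> \<bar>y\<bar> + \<bar>C2\<bar> + 1"
    proof -
      have "(\<bar>y\<bar> + \<bar>C2\<bar> + 1) / (I * cc) * (I * cc) \<le> z * (I * cc)"
        by (rule mult_right_mono[OF zb]) (use Icc in simp)
      moreover have "(\<bar>y\<bar> + \<bar>C2\<bar> + 1) / (I * cc) * (I * cc) = \<bar>y\<bar> + \<bar>C2\<bar> + 1"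
      proof -
        have ne: "I * cc \<noteq> 0" using Icc by (metis less_irrefl)
        have "(\<bar>y\<bar> + \<bar>C2\<bar> + 1) / (I * cc) * (I * cc) = (\<bar>y\<bar> + \<bar>C2\<bar> + 1) * (I * cc) / (I * cc)"
          by (rule times_divide_eq_left)
        also have "\<dots> = \<bar>y\<bar> + \<bar>C2\<bar> + 1" by (rule nonzero_mult_div_cancel_right[OF ne])
        finally show ?thesis .
      qed
      ultimately show ?thesis by (simp add: mult.commute mult.left_commute)
    qed
    ultimately have "y < I * z * cc - (z / \<alpha>) powr p * C2" by linarith
    then have "ereal y < ereal (I * z * cc - (z / \<alpha>) powr p * C2)" by simp
    also have "\<dots> \<le> JJ z" by (rule J_lower[OF z])
    finally show ?case .
  qed
qed

end

theorem proposition4p4: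
  fixes M :: "'a measure" and F :: "real \<Rightarrow> 'a measure" and B :: "real \<Rightarrow> 'a \<Rightarrow> real"
    and T r \<mu> \<sigma> \<rho> m0 m1 \<kappa> \<delta> \<alpha> I fI t h :: real
  assumes "usual_filtered_prob_space M F"
    and "std_F_brownian_motion M F B"
    and "T > 0" and "r > 0" and "\<sigma> > 0" and "\<rho> > 0" and "m0 \<ge> 0" and "m1 \<ge> 0"
    and "\<kappa> > 0" and "\<delta> > 0" and "0 < \<alpha>" and "\<alpha> < 1" and "I > 0" and "fI > 0"
    and "0 \<le> t" and "t < T" and "h > 0"
  shows "((\<lambda>z. J_hat M F B T r \<mu> \<sigma> \<rho> m0 m1 \<kappa> \<delta> \<alpha> I fI t z h) \<longlongrightarrow> 0) (at_right 0) \<and>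
         ((\<lambda>z. J_hat M F B T r \<mu> \<sigma> \<rho> m0 m1 \<kappa> \<delta> \<alpha> I fI t z h) \<longlongrightarrow> \<infinity>) at_top"
proof -
  have pneg: "\<alpha> / (\<alpha> - 1) < 0" using assms(11,12) by (simp add: divide_pos_neg)
  then have plt: "\<alpha> / (\<alpha> - 1) < 1" by simp
  interpret X: main M F B \<delta> fI m0 m1 \<kappa> \<alpha> "\<alpha> / (\<alpha> - 1)"
    "- \<rho> + (\<alpha> / (\<alpha> - 1)) * (\<rho> - r) - (\<alpha> / (\<alpha> - 1)) * (theta \<mu> r \<sigma>)\<^sup>2 / 2 + (\<alpha> / (\<alpha> - 1))\<^sup>2 * (theta \<mu> r \<sigma>)\<^sup>2 / 2"
    T r \<mu> \<sigma> \<rho> I t h "theta \<mu> r \<sigma>"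
  proof (rule main.intro)
    show "bmset M F B" by (rule bmset.intro[OF assms(1) assms(2)])
    show "ana \<delta> fI m1 \<kappa> \<alpha> (\<alpha> / (\<alpha> - 1))"
      by (rule ana.intro[OF assms(10) assms(14) assms(8) assms(9) assms(11) assms(12) plt])
    show "main_axioms \<alpha> (\<alpha> / (\<alpha> - 1))
     (- \<rho> + \<alpha> / (\<alpha> - 1) * (\<rho> - r) - \<alpha> / (\<alpha> - 1) * (theta \<mu> r \<sigma>)\<^sup>2 / 2 + (\<alpha> / (\<alpha> - 1))\<^sup>2 * (theta \<mu> r \<sigma>)\<^sup>2 / 2)
     T r \<mu> \<sigma> \<rho> I t h (theta \<mu> r \<sigma>)"
      by (rule main_axioms.intro[OF refl refl refl assms(3) assms(4) assms(13) assms(15) assms(16) assms(17)])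
  qed
  show ?thesis using X.lim0 X.limInf by simp
qed

end
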